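(* Let $d$ be a premetric on a topological space $X$, and put $p=\overline d$ and $\rho=\overline d^\circ$. Then for every non-empty $A\subset X$ we have $\overline p_A=\overline d_A$ and $\overline\rho^\circ_A=\overline d^\circ_A$.
   Context: A premetric on $X$ is $d:X\times X\to[0,\infty)$ with $d(x,x)=0$. $B_d(x,\varepsilon)=\{y:d(x,y)<\varepsilon\}$, $B_d(A,\varepsilon)=\bigcup_{a\in A}B_d(a,\varepsilon)$. For non-empty $A$: $\overline d_A(x)=\inf\{\varepsilon>0:x\in\overline{B_d(A,\varepsilon)}\}$ and $\overline d^\circ_A(x)=\inf\{\varepsilon>0:x\in B_d(A,\varepsilon)\cup\mathrm{int}\,\overline{B_d(A,\varepsilon)}\}$ (same definitions for any premetric in place of $d$). The regularization is $\overline d(x,y)=\overline d_{\{x\}}(y)$, the semiregularization $\overline d^\circ(x,y)=\overline d^\circ_{\{x\}}(y)$. *)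

theory Defs
  imports "HOL-Analysis.Analysis"
begin

definition premetric :: "('a \<Rightarrow> 'a \<Rightarrow> real) \<Rightarrow> bool" where
  "premetric d \<longleftrightarrow> (\<forall>x y. 0 \<le> d x y) \<and> (\<forall>x. d x x = 0)"

definition pball :: "('a \<Rightarrow> 'a \<Rightarrow> real) \<Rightarrow> 'a \<Rightarrow> real \<Rightarrow> 'a set" where
  "pball d x e = {y. d x y < e}"

definition psetball :: "('a \<Rightarrow> 'a \<Rightarrow> real) \<Rightarrow> 'a set \<Rightarrow> real \<Rightarrow> 'a set" where
  "psetball d A e = (\<Union>a\<in>A. pball d a e)"

definition dbar :: "('a::topological_space \<Rightarrow> 'a \<Rightarrow> real) \<Rightarrow> 'a set \<Rightarrow> 'a \<Rightarrow> real" where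
  "dbar d A x = Inf {e. e > 0 \<and> x \<in> closure (psetball d A e)}"

definition dbar_int :: "('a::topological_space \<Rightarrow> 'a \<Rightarrow> real) \<Rightarrow> 'a set \<Rightarrow> 'a \<Rightarrow> real" where
  "dbar_int d A x = Inf {e. e > 0 \<and> x \<in> psetball d A e \<union> interior (closure (psetball d A e))}"

definition regularization :: "('a::topological_space \<Rightarrow> 'a \<Rightarrow> real) \<Rightarrow> 'a \<Rightarrow> 'a \<Rightarrow> real" where
  "regularization d x y = dbar d {x} y"

definition semiregularization :: "('a::topological_space \<Rightarrow> 'a \<Rightarrow> real) \<Rightarrow> 'a \<Rightarrow> 'a \<Rightarrow> real" where
  "semiregularization d x y = dbar_int d {x} y"

end

theory Submission
  imports Defs
begin

lemma psetball_mono: "e' \<le> e \<Longrightarrow> psetball d A e' \<subseteq> psetball d A e"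
  unfolding psetball_def pball_def by auto

lemma inf_lt_aux:
  fixes S :: "real set"
  assumes "\<And>e. e > 0 \<Longrightarrow> c < e \<Longrightarrow> e \<in> S" "\<forall>e\<in>S. e > 0" "c \<ge> 0" "c < e"
  shows "Inf S < e"
proof -
  have "(c+e)/2 \<in> S" using assms by auto
  moreover have "bdd_below S" using assms(2) by (meson bdd_below.I less_imp_le)
  ultimately have "Inf S \<le> (c+e)/2" by (rule cInf_lower)
  also have "... < e" using assms(4) by simp
  finally show ?thesis .
qed

lemma reg_lt: assumes "premetric d" "d x y < e" shows "regularization d x y < e"
  unfolding regularization_def dbar_def
proof (rule inf_lt_aux[where c="d x y"])
  fix e' :: real assume "e' > 0" "d x y < e'"
  hence "y \<in> psetball d {x} e'" unfolding psetball_def pball_def by auto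
  thus "e' \<in> {e. e > 0 \<and> y \<in> closure (psetball d {x} e)}" using \<open>e'>0\<close> closure_subset by blast
qed (use assms in \<open>auto simp: premetric_def\<close>)

lemma sreg_lt: assumes "premetric d" "d x y < e" shows "semiregularization d x y < e"
  unfolding semiregularization_def dbar_int_def
proof (rule inf_lt_aux[where c="d x y"])
  fix e' :: real assume "e' > 0" "d x y < e'"
  hence "y \<in> psetball d {x} e'" unfolding psetball_def pball_def by auto
  thus "e' \<in> {e. e > 0 \<and> y \<in> psetball d {x} e \<union> interior (closure (psetball d {x} e))}" using \<open>e'>0\<close> by blast
qed (use assms in \<open>auto simp: premetric_def\<close>)

lemma reg_lt2: assumes "regularization d x y < e"
  shows "\<exists>e'<e. e' > 0 \<and> y \<in> closure (psetball d {x} e')"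
proof -
  let ?S = "{e. e > 0 \<and> y \<in> closure (psetball d {x} e)}"
  have "\<bar>d x y\<bar> + 1 \<in> ?S" unfolding psetball_def pball_def using closure_subset by fastforce
  hence "?S \<noteq> {}" by blast
  from cInf_lessD[OF this] assms show ?thesis unfolding regularization_def dbar_def by auto
qed

lemma sreg_lt2: assumes "semiregularization d x y < e"
  shows "\<exists>e'<e. e' > 0 \<and> y \<in> psetball d {x} e' \<union> interior (closure (psetball d {x} e'))"
proof -
  let ?S = "{e. e > 0 \<and> y \<in> psetball d {x} e \<union> interior (closure (psetball d {x} e))}"
  have "\<bar>d x y\<bar> + 1 \<in> ?S" unfolding psetball_def pball_def by fastforce
  hence "?S \<noteq> {}" by blast
  from cInf_lessD[OF this] assms show ?thesis unfolding semiregularization_def dbar_int_def by auto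
qed

lemma sub_reg: assumes "premetric d" shows "psetball d A e \<subseteq> psetball (regularization d) A e"
  using reg_lt[OF assms] unfolding psetball_def pball_def by blast

lemma sub_sreg: assumes "premetric d" shows "psetball d A e \<subseteq> psetball (semiregularization d) A e"
  using sreg_lt[OF assms] unfolding psetball_def pball_def by blast

lemma reg_sub: "psetball (regularization d) A e \<subseteq> closure (psetball d A e)"
proof
  fix y assume "y \<in> psetball (regularization d) A e"
  then obtain a where a: "a \<in> A" "regularization d a y < e" unfolding psetball_def pball_def by auto
  then obtain e' where "e' < e" "y \<in> closure (psetball d {a} e')" using reg_lt2 by blast
  moreover have "psetball d {a} e' \<subseteq> psetball d A e" using a(1) \<open>e'<e\<close>
    unfolding psetball_def pball_def by force
  ultimately show "y \<in> closure (psetball d A e)" using closure_mono[of "psetball d {a} e'" "psetball d A e"] by blast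
qed

lemma sreg_sub: "psetball (semiregularization d) A e \<subseteq> psetball d A e \<union> interior (closure (psetball d A e))"
proof
  fix y assume "y \<in> psetball (semiregularization d) A e"
  then obtain a where a: "a \<in> A" "semiregularization d a y < e" unfolding psetball_def pball_def by auto
  then obtain e' where "e' < e" "y \<in> psetball d {a} e' \<union> interior (closure (psetball d {a} e'))" using sreg_lt2 by blast
  moreover have "psetball d {a} e' \<subseteq> psetball d A e" using a(1) \<open>e'<e\<close>
    unfolding psetball_def pball_def by auto
  moreover have "interior (closure (psetball d {a} e')) \<subseteq> interior (closure (psetball d A e))"
    by (intro interior_mono closure_mono) fact
  ultimately show "y \<in> psetball d A e \<union> interior (closure (psetball d A e))"
    by blast
qed

theorem proposition1p5:
  fixes d :: "'a::topological_space \<Rightarrow> 'a \<Rightarrow> real" and A :: "'a set"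
  assumes "premetric d" and "A \<noteq> {}"
  shows "dbar (regularization d) A = dbar d A
       \<and> dbar_int (semiregularization d) A = dbar_int d A"
proof
  have "closure (psetball (regularization d) A e) = closure (psetball d A e)" for e
  proof
    show "closure (psetball (regularization d) A e) \<subseteq> closure (psetball d A e)"
      using reg_sub by (metis closure_closure closure_mono)
    show "closure (psetball d A e) \<subseteq> closure (psetball (regularization d) A e)"
      using sub_reg[OF assms(1)] closure_mono by blast
  qed
  thus "dbar (regularization d) A = dbar d A" unfolding dbar_def by simp
next
  have c: "closure (psetball (semiregularization d) A e) = closure (psetball d A e)" for e
  proof
    have "psetball (semiregularization d) A e \<subseteq> closure (psetball d A e)"
      using sreg_sub[of d A e] closure_subset interior_subset by blast
    thus "closure (psetball (semiregularization d) A e) \<subseteq> closure (psetball d A e)"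
      by (metis closure_closure closure_mono)
    show "closure (psetball d A e) \<subseteq> closure (psetball (semiregularization d) A e)"
      using sub_sreg[OF assms(1)] closure_mono by blast
  qed
  have "psetball (semiregularization d) A e \<union> interior (closure (psetball (semiregularization d) A e))
      = psetball d A e \<union> interior (closure (psetball d A e))" for e
    unfolding c using sreg_sub[of d A e] sub_sreg[OF assms(1), of A e] by blast
  thus "dbar_int (semiregularization d) A = dbar_int d A" unfolding dbar_int_def by simp
qed

end
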